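(* The variety $\mathsf{V}(S_{(4,445)})$ is the ai-semiring variety defined by the identities $x^2y\approx xy$, $xyz\approx xzy$, $x^2\approx x^2+x$, $x_1+x_2x_3\approx x_1+x_2x_3+x_1x_2x_3x_4$.
   Context: An ai-semiring is an algebra $(S,+,\cdot)$ with $(S,+)$ a semilattice, $(S,\cdot)$ a semigroup, and both distributive laws. $\mathsf{V}(S)$ is the variety generated by $S$; "the ai-semiring variety defined by identities $\Sigma$" is the class of all ai-semirings satisfying $\Sigma$. $S_{(4,445)}$ has carrier $\{1,2,3,4\}$; addition: $x+x=x$, $2+x=x$, $1+x=1$ for all $x$, $3+4=1$; multiplication (row $a$, column $b$ gives $a\cdot b$): row $1$: $1,2,1,1$; row $2$: $2,2,2,2$; row $3$: $1,2,1,1$; row $4$: $4,2,4,4$. *)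

theory Defs
  imports Main
begin

definition ai_semiring :: "('a \<Rightarrow> 'a \<Rightarrow> 'a) \<Rightarrow> ('a \<Rightarrow> 'a \<Rightarrow> 'a) \<Rightarrow> bool" where
  "ai_semiring add mul \<longleftrightarrow>
     (\<forall>x y z. add (add x y) z = add x (add y z)) \<and>
     (\<forall>x y. add x y = add y x) \<and>
     (\<forall>x. add x x = x) \<and>
     (\<forall>x y z. mul (mul x y) z = mul x (mul y z)) \<and>
     (\<forall>x y z. mul x (add y z) = add (mul x y) (mul x z)) \<and>
     (\<forall>x y z. mul (add x y) z = add (mul x z) (mul y z))"

datatype trm = Var nat | Pl trm trm | Ti trm trm

fun eval :: "('a \<Rightarrow> 'a \<Rightarrow> 'a) \<Rightarrow> ('a \<Rightarrow> 'a \<Rightarrow> 'a) \<Rightarrow> (nat \<Rightarrow> 'a) \<Rightarrow> trm \<Rightarrow> 'a" where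
  "eval add mul v (Var n) = v n"
| "eval add mul v (Pl s t) = add (eval add mul v s) (eval add mul v t)"
| "eval add mul v (Ti s t) = mul (eval add mul v s) (eval add mul v t)"

definition satisfies :: "('a \<Rightarrow> 'a \<Rightarrow> 'a) \<Rightarrow> ('a \<Rightarrow> 'a \<Rightarrow> 'a) \<Rightarrow> trm \<Rightarrow> trm \<Rightarrow> bool" where
  "satisfies add mul s t \<longleftrightarrow> (\<forall>v. eval add mul v s = eval add mul v t)"

text \<open>Membership in the variety V(B) generated by an algebra B (Birkhoff:
  V(B) = HSP(B) is the class of all algebras satisfying every identity of B).\<close>
definition in_variety_gen ::
  "('b \<Rightarrow> 'b \<Rightarrow> 'b) \<Rightarrow> ('b \<Rightarrow> 'b \<Rightarrow> 'b) \<Rightarrow> ('a \<Rightarrow> 'a \<Rightarrow> 'a) \<Rightarrow> ('a \<Rightarrow> 'a \<Rightarrow> 'a) \<Rightarrow> bool" where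
  "in_variety_gen addB mulB add mul \<longleftrightarrow>
     (\<forall>s t. satisfies addB mulB s t \<longrightarrow> satisfies add mul s t)"

datatype s4 = E1 | E2 | E3 | E4

fun s4_add :: "s4 \<Rightarrow> s4 \<Rightarrow> s4" where
  "s4_add E1 _ = E1"
| "s4_add _ E1 = E1"
| "s4_add E2 y = y"
| "s4_add x E2 = x"
| "s4_add E3 E3 = E3"
| "s4_add E4 E4 = E4"
| "s4_add E3 E4 = E1"
| "s4_add E4 E3 = E1"

fun s4_mul :: "s4 \<Rightarrow> s4 \<Rightarrow> s4" where
  "s4_mul _ E2 = E2"
| "s4_mul E2 _ = E2"
| "s4_mul E4 _ = E4"
| "s4_mul E1 _ = E1"
| "s4_mul E3 _ = E1"

end

theory Submission
  imports Defs
begin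

fun wev :: "('a \<Rightarrow> 'a \<Rightarrow> 'a) \<Rightarrow> (nat \<Rightarrow> 'a) \<Rightarrow> nat list \<Rightarrow> 'a" where
  "wev mul v [] = undefined"
| "wev mul v (x # r) = foldl (\<lambda>X y. mul X (v y)) (v x) r"

fun sumw :: "('a \<Rightarrow> 'a \<Rightarrow> 'a) \<Rightarrow> ('a \<Rightarrow> 'a \<Rightarrow> 'a) \<Rightarrow> (nat \<Rightarrow> 'a) \<Rightarrow> nat list list \<Rightarrow> 'a" where
  "sumw add mul v [] = undefined"
| "sumw add mul v (w # ws) = (if ws = [] then wev mul v w else add (wev mul v w) (sumw add mul v ws))"

fun wl :: "trm \<Rightarrow> nat list list" where
  "wl (Var n) = [[n]]"
| "wl (Pl s t) = wl s @ wl t"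
| "wl (Ti s t) = concat (map (\<lambda>u. map (\<lambda>w. u @ w) (wl t)) (wl s))"

lemma wl_ne: "wl s \<noteq> [] \<and> (\<forall>w\<in>set (wl s). w \<noteq> [])"
  by (induction s) auto

locale AI =
  fixes add mul :: "'a \<Rightarrow> 'a \<Rightarrow> 'a"
  assumes aC: "add (add x y) z = add x (add y z)"
    and comm: "add x y = add y x"
    and idem: "add x x = x"
    and mA: "mul (mul x y) z = mul x (mul y z)"
    and dl: "mul x (add y z) = add (mul x y) (mul x z)"
    and dr: "mul (add x y) z = add (mul x z) (mul y z)"
begin

definition le where "le a b \<longleftrightarrow> add a b = b"

lemma le_trans: "le a b \<Longrightarrow> le b c \<Longrightarrow> le a c"
  unfolding le_def by (metis aC)

lemma le_antisym: "le a b \<Longrightarrow> le b a \<Longrightarrow> a = b"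
  unfolding le_def by (metis comm)

lemma le_refl: "le a a" unfolding le_def by (rule idem)

lemma le_add1: "le a (add a b)" unfolding le_def by (metis aC idem)
lemma le_add2: "le b (add a b)" unfolding le_def by (metis aC idem comm)
lemma le_lub: "le a c \<Longrightarrow> le b c \<Longrightarrow> le (add a b) c" unfolding le_def by (metis aC)

lemma foldl_mul: "w \<noteq> [] \<Longrightarrow> foldl (\<lambda>X y. mul X (v y)) Z w = mul Z (wev mul v w)"
proof (induction w arbitrary: Z)
  case Nil then show ?case by simp
next
  case (Cons y w')
  show ?case
  proof (cases "w' = []")
    case True then show ?thesis by simp
  next
    case False
    have "foldl (\<lambda>X y. mul X (v y)) Z (y # w') = foldl (\<lambda>X y. mul X (v y)) (mul Z (v y)) w'" by simp
    also have "\<dots> = mul (mul Z (v y)) (wev mul v w')" using Cons.IH False by simp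
    also have "\<dots> = mul Z (mul (v y) (wev mul v w'))" by (rule mA)
    also have "mul (v y) (wev mul v w') = wev mul v (y # w')" using Cons.IH[OF False, of "v y"] by simp
    finally show ?thesis .
  qed
qed

lemma wev_app: "u \<noteq> [] \<Longrightarrow> w \<noteq> [] \<Longrightarrow> wev mul v (u @ w) = mul (wev mul v u) (wev mul v w)"
  by (cases u) (simp_all add: foldl_mul)

lemma sumw_app: "xs \<noteq> [] \<Longrightarrow> ys \<noteq> [] \<Longrightarrow> sumw add mul v (xs @ ys) = add (sumw add mul v xs) (sumw add mul v ys)"
  by (induction xs) (auto simp: aC)

lemma sumw_map: "ys \<noteq> [] \<Longrightarrow> u \<noteq> [] \<Longrightarrow> \<forall>w\<in>set ys. w \<noteq> [] \<Longrightarrow>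
   sumw add mul v (map (\<lambda>w. u @ w) ys) = mul (wev mul v u) (sumw add mul v ys)"
  by (induction ys) (auto simp: wev_app dl)

lemma sumw_concat: "xs \<noteq> [] \<Longrightarrow> ys \<noteq> [] \<Longrightarrow> \<forall>w\<in>set xs. w \<noteq> [] \<Longrightarrow> \<forall>w\<in>set ys. w \<noteq> [] \<Longrightarrow>
   sumw add mul v (concat (map (\<lambda>u. map (\<lambda>w. u @ w) ys) xs)) = mul (sumw add mul v xs) (sumw add mul v ys)"
proof (induction xs)
  case Nil then show ?case by simp
next
  case (Cons x xs)
  show ?case
  proof (cases "xs = []")
    case True then show ?thesis using Cons by (simp add: sumw_map)
  next
    case False
    have ne: "concat (map (\<lambda>u. map (\<lambda>w. u @ w) ys) xs) \<noteq> []" using False Cons.prems by (cases xs) auto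
    have "sumw add mul v (concat (map (\<lambda>u. map (\<lambda>w. u @ w) ys) (x # xs)))
        = add (sumw add mul v (map (\<lambda>w. x @ w) ys)) (sumw add mul v (concat (map (\<lambda>u. map (\<lambda>w. u @ w) ys) xs)))"
      using ne Cons.prems by (simp add: sumw_app)
    also have "\<dots> = add (mul (wev mul v x) (sumw add mul v ys)) (mul (sumw add mul v xs) (sumw add mul v ys))"
      using Cons False by (simp add: sumw_map)
    also have "\<dots> = mul (sumw add mul v (x # xs)) (sumw add mul v ys)" using False by (simp add: dr)
    finally show ?thesis .
  qed
qed

lemma eval_sumw: "eval add mul v s = sumw add mul v (wl s)"
proof (induction s)
  case (Var n) then show ?case by simp
next
  case (Pl s t) then show ?case using wl_ne[of s] wl_ne[of t] by (simp add: sumw_app)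
next
  case (Ti s t) then show ?case using wl_ne[of s] wl_ne[of t] by (simp add: sumw_concat)
qed

lemma le_sumw: "w \<in> set ws \<Longrightarrow> le (wev mul v w) (sumw add mul v ws)"
proof (induction ws)
  case Nil then show ?case by simp
next
  case (Cons x ws)
  then show ?case
    by (cases "ws = []") (auto simp: le_refl le_add1 intro: le_trans[OF _ le_add2])
qed

lemma sumw_le: "ws \<noteq> [] \<Longrightarrow> \<forall>w\<in>set ws. le (wev mul v w) X \<Longrightarrow> le (sumw add mul v ws) X"
  by (induction ws) (auto intro: le_lub)

end


locale MM = AI +
  assumes i1: "mul (mul x x) y = mul x y"
    and i2: "mul (mul x y) z = mul (mul x z) y"
    and i3: "mul x x = add (mul x x) x"
    and i4: "add x1 (mul x2 x3) = add (add x1 (mul x2 x3)) (mul (mul (mul x1 x2) x3) x4)"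
begin

lemma dec1: "le (mul (mul x y) z) (mul x y)"
proof -
  have "add (mul x y) (mul x y) = add (add (mul x y) (mul x y)) (mul (mul (mul (mul x y) x) y) z)"
    by (rule i4)
  also have "mul (mul (mul x y) x) y = mul (mul x y) (mul x y)" by (simp add: mA)
  also have "mul (mul (mul x y) (mul x y)) z = mul (mul x y) z" by (rule i1)
  finally show ?thesis unfolding le_def by (metis idem comm)
qed

lemma sq_ge: "le x (mul x x)" unfolding le_def using i3 comm by metis

lemma i5: "mul (mul x y) y = mul x y"
proof (rule le_antisym)
  show "le (mul (mul x y) y) (mul x y)" by (rule dec1)
  have "mul (mul x y) (mul x y) = mul (mul (mul x y) x) y" by (simp add: mA)
  also have "mul (mul x y) x = mul (mul x x) y" by (rule i2)
  also have "mul (mul (mul x x) y) y = mul (mul x x) (mul y y)" by (simp add: mA)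
  also have "\<dots> = mul x (mul y y)" by (rule i1)
  also have "\<dots> = mul (mul x y) y" by (simp add: mA)
  finally show "le (mul x y) (mul (mul x y) y)" using sq_ge[of "mul x y"] by simp
qed

abbreviation "fl v \<equiv> foldl (\<lambda>X y. mul X (v y))"

lemma c1: "fl v (mul X Y) q = mul (fl v X q) Y"
  by (induction q arbitrary: X) (simp_all, metis i2)

lemma swap: "fl v (fl v X r) q = fl v (fl v X q) r"
  by (induction r arbitrary: X) (simp_all add: c1)

lemma absorb: "y \<in> set q \<Longrightarrow> mul (fl v X q) (v y) = fl v X q"
proof (induction q arbitrary: X)
  case Nil then show ?case by simp
next
  case (Cons z q')
  show ?case
  proof (cases "y = z")
    case True
    then show ?thesis by (simp add: c1[symmetric] i5)
  next
    case False then show ?thesis using Cons by simp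
  qed
qed

lemma habsorb: "q \<noteq> [] \<Longrightarrow> mul (fl v (v a) q) (v a) = fl v (v a) q"
proof (cases q)
  case (Cons z q')
  have "mul (mul (v a) (v z)) (v a) = mul (v a) (v z)" by (metis i1 i2)
  then show ?thesis using Cons by (simp add: c1[symmetric])
qed simp

lemma fixl: "\<forall>y\<in>set r. mul W (v y) = W \<Longrightarrow> fl v W r = W"
  by (induction r) auto

lemma decq: "le (fl v (mul P Y) q) (mul P Y)"
proof (induction q arbitrary: Y)
  case Nil then show ?case by (simp add: le_refl)
next
  case (Cons y q')
  have "fl v (mul P Y) (y # q') = fl v (mul P (mul Y (v y))) q'" by (simp add: mA)
  moreover have "le (fl v (mul P (mul Y (v y))) q') (mul P (mul Y (v y)))" by (rule Cons.IH)
  moreover have "le (mul P (mul Y (v y))) (mul P Y)" using dec1 by (metis mA)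
  ultimately show ?case using le_trans by metis
qed

lemma mono: "r \<noteq> [] \<Longrightarrow> q \<noteq> [] \<Longrightarrow> set r \<subseteq> insert a (set q) \<Longrightarrow>
   le (wev mul v (a # q)) (wev mul v (a # r))"
proof -
  assume r: "r \<noteq> []" and q: "q \<noteq> []" and sub: "set r \<subseteq> insert a (set q)"
  define Z where "Z = fl v (v a) r"
  have Zp: "Z = mul (v a) (wev mul v r)" unfolding Z_def using r by (simp add: foldl_mul)
  have "le (fl v Z q) Z" unfolding Zp by (rule decq)
  moreover have "fl v Z q = fl v (fl v (v a) q) r" unfolding Z_def by (rule swap)
  moreover have "fl v (fl v (v a) q) r = fl v (v a) q"
  proof (rule fixl, rule ballI)
    fix y assume "y \<in> set r"
    then have "y = a \<or> y \<in> set q" using sub by auto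
    then show "mul (fl v (v a) q) (v y) = fl v (v a) q"
      using absorb habsorb q by auto
  qed
  ultimately show ?thesis unfolding Z_def by simp
qed

lemma pow_ge: "u \<noteq> [] \<Longrightarrow> set u \<subseteq> {a} \<Longrightarrow> le (v a) (wev mul v u)"
proof -
  assume "u \<noteq> []" "set u \<subseteq> {a}"
  then obtain r where u: "u = a # r" and r: "set r \<subseteq> {a}" by (cases u) auto
  show ?thesis
  proof (cases r)
    case Nil then show ?thesis using u by (simp add: le_refl)
  next
    case (Cons b r')
    then have b: "b = a" and r': "set r' \<subseteq> {a}" using r by auto
    have "fl v (mul (v a) (v a)) r' = mul (v a) (v a)"
      by (rule fixl) (use r' i5 in auto)
    then show ?thesis using u Cons b sq_ge by simp
  qed
qed

end


lemma S_ai: "AI s4_add s4_mul"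
  apply unfold_locales
  subgoal for x y z by (cases x; cases y; cases z) simp_all
  subgoal for x y by (cases x; cases y) simp_all
  subgoal for x by (cases x) simp_all
  subgoal for x y z by (cases x; cases y; cases z) simp_all
  subgoal for x y z by (cases x; cases y; cases z) simp_all
  subgoal for x y z by (cases x; cases y; cases z) simp_all
  done

interpretation S: AI s4_add s4_mul by (rule S_ai)

lemma s4_mul_E2r[simp]: "s4_mul x E2 = E2" by (cases x) auto

lemma s4_mul_E2l[simp]: "s4_mul E2 x = E2" by (cases x) auto

lemma flS2: "foldl (\<lambda>X y. s4_mul X (v y)) E2 r = E2"
  by (induction r) auto

lemma flS_has2: "y \<in> set r \<Longrightarrow> v y = E2 \<Longrightarrow> foldl (\<lambda>X y. s4_mul X (v y)) Z r = E2"
  by (induction r arbitrary: Z) (auto simp: flS2)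

lemma wevS_E2: "x \<in> set u \<Longrightarrow> v x = E2 \<Longrightarrow> wev s4_mul v u = E2"
  by (cases u) (auto simp: flS2 flS_has2)

lemma flS_fix: "Z \<in> {E1, E4} \<Longrightarrow> \<forall>y\<in>set r. v y \<noteq> E2 \<Longrightarrow> foldl (\<lambda>X y. s4_mul X (v y)) Z r = Z"
proof (induction r)
  case Nil then show ?case by simp
next
  case (Cons y r)
  have "s4_mul Z (v y) = Z" using Cons.prems by (cases "v y") auto
  then show ?case using Cons by simp
qed

lemma wevS_long: "\<forall>y\<in>set (x # y # r). v y \<noteq> E2 \<Longrightarrow>
   wev s4_mul v (x # y # r) = (if v x = E4 then E4 else E1)"
proof -
  assume h: "\<forall>y\<in>set (x # y # r). v y \<noteq> E2"
  have "s4_mul (v x) (v y) = (if v x = E4 then E4 else E1)" using h by (cases "v x"; cases "v y") auto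
  then show ?thesis using h flS_fix[of "if v x = E4 then E4 else E1" r v] by simp
qed

lemma sumwS_24: "U \<noteq> [] \<Longrightarrow> \<forall>u\<in>set U. wev s4_mul v u \<in> {E2, E4} \<Longrightarrow> sumw s4_add s4_mul v U \<in> {E2, E4}"
proof (induction U)
  case Nil then show ?case by simp
next
  case (Cons u U)
  have "\<And>a b. a \<in> {E2, E4} \<Longrightarrow> b \<in> {E2, E4} \<Longrightarrow> s4_add a b \<in> {E2, E4}" by auto
  then show ?case using Cons by (cases "U = []") auto
qed

lemma sumwS_23: "U \<noteq> [] \<Longrightarrow> \<forall>u\<in>set U. wev s4_mul v u \<in> {E2, E3} \<Longrightarrow> sumw s4_add s4_mul v U \<in> {E2, E3}"
proof (induction U)
  case Nil then show ?case by simp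
next
  case (Cons u U)
  have "\<And>a b. a \<in> {E2, E3} \<Longrightarrow> b \<in> {E2, E3} \<Longrightarrow> s4_add a b \<in> {E2, E3}" by auto
  then show ?case using Cons by (cases "U = []") auto
qed

lemma sumwS_2: "U \<noteq> [] \<Longrightarrow> \<forall>u\<in>set U. wev s4_mul v u = E2 \<Longrightarrow> sumw s4_add s4_mul v U = E2"
proof (induction U)
  case Nil then show ?case by simp
next
  case (Cons u U)
  then show ?case by (cases "U = []") auto
qed


context MM
begin

lemma key:
  assumes w: "w \<noteq> []" and U: "U \<noteq> []" and Une: "\<forall>u\<in>set U. u \<noteq> []"
    and H: "\<And>v'. s4_add (wev s4_mul v' w) (sumw s4_add s4_mul v' U) = sumw s4_add s4_mul v' U"
  shows "le (wev mul v w) (sumw add mul v U)"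
proof -
  obtain a r where war: "w = a # r" using w by (cases w) auto
  show ?thesis
  proof (cases "r = []")
    case True
    define v1 where "v1 = (\<lambda>x. if x = a then E3 else E2)"
    have "wev s4_mul v1 w = E3" using war True v1_def by simp
    then have "sumw s4_add s4_mul v1 U \<noteq> E2" using H[of v1] by auto
    then obtain u where uU: "u \<in> set U" and u2: "wev s4_mul v1 u \<noteq> E2" using sumwS_2[OF U] by blast
    have "set u \<subseteq> {a}"
    proof
      fix x assume "x \<in> set u"
      then have "v1 x \<noteq> E2" using u2 wevS_E2 by metis
      then show "x \<in> {a}" unfolding v1_def by (auto split: if_splits)
    qed
    then have "le (v a) (wev mul v u)" using pow_ge Une uU by blast
    then show ?thesis using war True le_sumw[OF uU] le_trans by simp
  next
    case False
    then obtain b r' where rr: "r = b # r'" by (cases r) auto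
    define C where "C = set w"
    have aC: "a \<in> C" using war C_def by simp
    define v2 where "v2 = (\<lambda>x. if x = a then E3 else if x \<in> C then E4 else E2)"
    have "wev s4_mul v2 w = E1"
      using wevS_long[of a b r' v2] war rr unfolding v2_def C_def by auto
    then have "sumw s4_add s4_mul v2 U = E1" using H[of v2] by simp
    then obtain u where uU: "u \<in> set U" and u24: "wev s4_mul v2 u \<notin> {E2, E4}"
      using sumwS_24[OF U, of v2] by auto
    have uC: "set u \<subseteq> C"
    proof
      fix x assume "x \<in> set u"
      then have "v2 x \<noteq> E2" using u24 wevS_E2 by fastforce
      then show "x \<in> C" unfolding v2_def using aC by (auto split: if_splits)
    qed
    obtain r2 where ur: "u = a # r2"
    proof -
      obtain x r2 where ux: "u = x # r2" using Une uU by (cases u) auto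
      have nz: "\<forall>y\<in>set u. v2 y \<noteq> E2" using uC unfolding v2_def using aC by auto
      have "x = a"
      proof (cases r2)
        case Nil
        then have "v2 x \<notin> {E2, E4}" using u24 ux by simp
        then show ?thesis unfolding v2_def by (auto split: if_splits)
      next
        case (Cons y r3)
        then have "wev s4_mul v2 u = (if v2 x = E4 then E4 else E1)"
          using wevS_long[of x y r3 v2] nz ux by simp
        then have "v2 x \<noteq> E4" using u24 by auto
        then show ?thesis using nz ux unfolding v2_def by (auto split: if_splits)
      qed
      then show ?thesis using that ux by blast
    qed
    show ?thesis
    proof (cases "r2 = []")
      case False
      have "le (wev mul v w) (wev mul v u)"
        using mono[of r2 r a v] False rr war ur uC C_def by auto
      then show ?thesis using le_sumw[OF uU] le_trans by blast
    next
      case True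
      define v3 where "v3 = (\<lambda>x. if x \<in> C then E3 else E2)"
      have "wev s4_mul v3 w = E1"
        using wevS_long[of a b r' v3] war rr unfolding v3_def C_def by auto
      then have "sumw s4_add s4_mul v3 U = E1" using H[of v3] by simp
      then obtain t where tU: "t \<in> set U" and t23: "wev s4_mul v3 t \<notin> {E2, E3}"
        using sumwS_23[OF U, of v3] by auto
      have tC: "set t \<subseteq> C"
      proof
        fix x assume "x \<in> set t"
        then have "v3 x \<noteq> E2" using t23 wevS_E2 by fastforce
        then show "x \<in> C" unfolding v3_def by (auto split: if_splits)
      qed
      obtain c q where tq: "t = c # q" and qne: "q \<noteq> []"
      proof -
        obtain c q where tq: "t = c # q" using Une tU by (cases t) auto
        have "q \<noteq> []"
        proof
          assume "q = []"
          then have "wev s4_mul v3 t = E3" using tq tC v3_def by auto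
          then show False using t23 by simp
        qed
        then show ?thesis using that tq by blast
      qed
      have "add (v a) (mul (v c) (wev mul v q)) =
          add (add (v a) (mul (v c) (wev mul v q))) (mul (mul (mul (v a) (v c)) (wev mul v q)) (wev mul v w))"
        by (rule i4)
      moreover have "mul (v c) (wev mul v q) = wev mul v t" using tq qne foldl_mul by simp
      moreover have "mul (mul (mul (v a) (v c)) (wev mul v q)) (wev mul v w) = wev mul v (a # c # q @ w)"
        using qne w by (simp add: foldl_mul)
      ultimately have l1: "le (wev mul v (a # c # q @ w)) (add (v a) (wev mul v t))"
        unfolding le_def by (metis comm)
      have "le (wev mul v w) (wev mul v (a # c # q @ w))"
        using mono[of "c # q @ w" r a v] rr war tC tq C_def by auto
      moreover have "le (add (v a) (wev mul v t)) (sumw add mul v U)"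
        using le_lub le_sumw[OF uU] le_sumw[OF tU] ur True by fastforce
      ultimately show ?thesis using l1 le_trans by blast
    qed
  qed
qed

end


lemma half: "MM add mul \<Longrightarrow> satisfies s4_add s4_mul s t \<Longrightarrow> \<forall>w\<in>set (wl s).
   AI.le add (wev mul v w) (sumw add mul v (wl t))"
proof
  fix w assume M: "MM add mul" and st: "satisfies s4_add s4_mul s t" and ws: "w \<in> set (wl s)"
  interpret MM add mul by (rule M)
  show "le (wev mul v w) (sumw add mul v (wl t))"
  proof (rule key)
    show "w \<noteq> []" "wl t \<noteq> []" "\<forall>u\<in>set (wl t). u \<noteq> []" using wl_ne[of s] wl_ne[of t] ws by auto
    fix v'
    have "S.le (wev s4_mul v' w) (sumw s4_add s4_mul v' (wl s))" by (rule S.le_sumw[OF ws])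
    moreover have "sumw s4_add s4_mul v' (wl s) = sumw s4_add s4_mul v' (wl t)"
      using st unfolding satisfies_def by (simp add: S.eval_sumw[symmetric])
    ultimately show "s4_add (wev s4_mul v' w) (sumw s4_add s4_mul v' (wl t)) = sumw s4_add s4_mul v' (wl t)"
      unfolding S.le_def by simp
  qed
qed

lemma backward: "MM add mul \<Longrightarrow> in_variety_gen s4_add s4_mul add mul"
  unfolding in_variety_gen_def
proof (intro allI impI)
  fix s t assume M: "MM add mul" and st: "satisfies s4_add s4_mul s t"
  interpret MM add mul by (rule M)
  have ts: "satisfies s4_add s4_mul t s" using st unfolding satisfies_def by simp
  show "satisfies add mul s t" unfolding satisfies_def
  proof
    fix v
    have "le (sumw add mul v (wl s)) (sumw add mul v (wl t))"
      using sumw_le wl_ne half[OF M st] by blast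
    moreover have "le (sumw add mul v (wl t)) (sumw add mul v (wl s))"
      using sumw_le wl_ne half[OF M ts] by blast
    ultimately show "eval add mul v s = eval add mul v t" by (simp add: eval_sumw le_antisym)
  qed
qed

lemma use_id: "in_variety_gen s4_add s4_mul add mul \<Longrightarrow> satisfies s4_add s4_mul s t \<Longrightarrow>
  eval add mul v s = eval add mul v t"
  unfolding in_variety_gen_def satisfies_def by blast

lemma S_i1: "s4_mul (s4_mul x x) y = s4_mul x y" by (cases x; cases y) simp_all
lemma S_i2: "s4_mul (s4_mul x y) z = s4_mul (s4_mul x z) y" by (cases x; cases y; cases z) simp_all
lemma S_i3: "s4_mul x x = s4_add (s4_mul x x) x" by (cases x) simp_all
lemma S_i4: "s4_add x1 (s4_mul x2 x3) = s4_add (s4_add x1 (s4_mul x2 x3)) (s4_mul (s4_mul (s4_mul x1 x2) x3) x4)"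
  by (cases x1; cases x2; cases x3; cases x4) simp_all

theorem proposition7p5:
  fixes add mul :: "'a \<Rightarrow> 'a \<Rightarrow> 'a"
  shows "in_variety_gen s4_add s4_mul add mul \<longleftrightarrow>
           ai_semiring add mul \<and>
           (\<forall>x y. mul (mul x x) y = mul x y) \<and>
           (\<forall>x y z. mul (mul x y) z = mul (mul x z) y) \<and>
           (\<forall>x. mul x x = add (mul x x) x) \<and>
           (\<forall>x1 x2 x3 x4. add x1 (mul x2 x3) =
                add (add x1 (mul x2 x3)) (mul (mul (mul x1 x2) x3) x4))"
proof
  assume V: "in_variety_gen s4_add s4_mul add mul"
  let ?x = "Var 0" and ?y = "Var 1" and ?z = "Var 2" and ?w = "Var 3"
  have sat: "satisfies s4_add s4_mul s t \<Longrightarrow> eval add mul ((!) [x, y, z, w]) s = eval add mul ((!) [x, y, z, w]) t"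
    for s t x y z w by (rule use_id[OF V])
  have "ai_semiring add mul" unfolding ai_semiring_def
  proof (intro conjI allI)
    fix x y z
    show "add (add x y) z = add x (add y z)"
      using sat[of "Pl (Pl ?x ?y) ?z" "Pl ?x (Pl ?y ?z)" x y z z]
      by (simp add: satisfies_def S.aC)
    show "mul (mul x y) z = mul x (mul y z)"
      using sat[of "Ti (Ti ?x ?y) ?z" "Ti ?x (Ti ?y ?z)" x y z z]
      by (simp add: satisfies_def S.mA)
    show "mul x (add y z) = add (mul x y) (mul x z)"
      using sat[of "Ti ?x (Pl ?y ?z)" "Pl (Ti ?x ?y) (Ti ?x ?z)" x y z z]
      by (simp add: satisfies_def S.dl)
    show "mul (add x y) z = add (mul x z) (mul y z)"
      using sat[of "Ti (Pl ?x ?y) ?z" "Pl (Ti ?x ?z) (Ti ?y ?z)" x y z z]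
      by (simp add: satisfies_def S.dr)
  next
    fix x y
    show "add x y = add y x"
      using sat[of "Pl ?x ?y" "Pl ?y ?x" x y y y]
      by (simp add: satisfies_def S.comm)
  next
    fix x
    show "add x x = x"
      using sat[of "Pl ?x ?x" "?x" x x x x]
      by (simp add: satisfies_def S.idem)
  qed
  moreover have "\<forall>x y. mul (mul x x) y = mul x y"
    using sat[of "Ti (Ti ?x ?x) ?y" "Ti ?x ?y"] by (simp add: satisfies_def S_i1)
  moreover have "\<forall>x y z. mul (mul x y) z = mul (mul x z) y"
    using sat[of "Ti (Ti ?x ?y) ?z" "Ti (Ti ?x ?z) ?y"] by (simp add: satisfies_def S_i2)
  moreover have "\<forall>x. mul x x = add (mul x x) x"
    using sat[of "Ti ?x ?x" "Pl (Ti ?x ?x) ?x"] by (simp add: satisfies_def S_i3[symmetric])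
  moreover have "\<forall>x1 x2 x3 x4. add x1 (mul x2 x3) =
                add (add x1 (mul x2 x3)) (mul (mul (mul x1 x2) x3) x4)"
    using sat[of "Pl ?x (Ti ?y ?z)" "Pl (Pl ?x (Ti ?y ?z)) (Ti (Ti (Ti ?x ?y) ?z) ?w)"]
    by (simp add: satisfies_def S_i4[symmetric])
  ultimately show "ai_semiring add mul \<and>
           (\<forall>x y. mul (mul x x) y = mul x y) \<and>
           (\<forall>x y z. mul (mul x y) z = mul (mul x z) y) \<and>
           (\<forall>x. mul x x = add (mul x x) x) \<and>
           (\<forall>x1 x2 x3 x4. add x1 (mul x2 x3) =
                add (add x1 (mul x2 x3)) (mul (mul (mul x1 x2) x3) x4))" by blast
next
  assume h: "ai_semiring add mul \<and>
           (\<forall>x y. mul (mul x x) y = mul x y) \<and>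
           (\<forall>x y z. mul (mul x y) z = mul (mul x z) y) \<and>
           (\<forall>x. mul x x = add (mul x x) x) \<and>
           (\<forall>x1 x2 x3 x4. add x1 (mul x2 x3) =
                add (add x1 (mul x2 x3)) (mul (mul (mul x1 x2) x3) x4))"
  have "MM add mul"
    using h unfolding ai_semiring_def by (intro MM.intro AI.intro MM_axioms.intro) (elim conjE, meson)+
  then show "in_variety_gen s4_add s4_mul add mul" by (rule backward)
qed

end
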